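(* Let $\ell$ be a positive integer, let $P$ be a path, and let $(Q_1,\ldots,Q_r)$ be an extension of $P$. Let $H=P\cup\bigcup_{s=1}^{r}Q_s$ and assume that every long cycle in $H$ has length at least $2\ell$. Then every cycle in $H$ is short.
   Context: A cycle is short if its length (number of edges) is less than $\ell$ and long otherwise. For a path $P$ with endvertices $u,v$, $\le_P$ denotes the total order on $V(P)$ given by distance from $u$ along $P$, and $xPy$ denotes the subpath of $P$ between $x,y\in V(P)$. For a subgraph $H$, an $H$-path is a path with two distinct endvertices in $H$ that is internally disjoint from $H$; a path of length $1$ between two vertices of $H$ is an $H$-path only if its edge is not in $E(H)$. Let $Q_1,\ldots,Q_r$ be $P$-paths and let $u_i,v_i$ be the endvertices of $Q_i$ with $u_i<_Pv_i$. The tuple $(Q_1,\ldots,Q_r)$ is an extension of $P$ if: (E1) $Q_1,\ldots,Q_r$ are pairwise internally disjoint; (E2) the cycle $u_iPv_i\cup Q_i$ is short for every $i$; (E3) $u_1=u$ and $v_r=v$; (E4) $u_i<_Pu_{i+1}<_Pv_i<_Pv_{i+1}$ for $i=1,\ldots,r-1$; (E5) $v_i\le_P u_{i+2}$ for $i=1,\ldots,r-2$. *)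

theory Defs
  imports Main
begin

text \<open>Paths and cycles are represented as lists of distinct vertices.
  A path P = [u, ..., v] has endvertices u = hd P and v = last P; the order
  \<le>_P is the order of positions in the list (distance from u along P).\<close>

definition path_edges :: "'a list \<Rightarrow> 'a set set" where
  "path_edges xs = {{xs ! i, xs ! Suc i} | i. Suc i < length xs}"

definition is_path :: "'a list \<Rightarrow> bool" where
  "is_path xs \<longleftrightarrow> xs \<noteq> [] \<and> distinct xs"

definition pos :: "'a list \<Rightarrow> 'a \<Rightarrow> nat" where
  "pos P x = (THE i. i < length P \<and> P ! i = x)"

definition inner :: "'a list \<Rightarrow> 'a set" where
  "inner xs = set (butlast (tl xs))"

definition is_H_path :: "'a list \<Rightarrow> 'a list \<Rightarrow> bool" where
  "is_H_path P Q \<longleftrightarrow> is_path Q \<and> length Q \<ge> 2 \<and>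
     hd Q \<in> set P \<and> last Q \<in> set P \<and> inner Q \<inter> set P = {} \<and>
     (length Q = 2 \<longrightarrow> {hd Q, last Q} \<notin> path_edges P)"

definition lo :: "'a list \<Rightarrow> 'a list \<Rightarrow> 'a" where
  "lo P Q = (if pos P (hd Q) < pos P (last Q) then hd Q else last Q)"

definition hi :: "'a list \<Rightarrow> 'a list \<Rightarrow> 'a" where
  "hi P Q = (if pos P (hd Q) < pos P (last Q) then last Q else hd Q)"

text \<open>Length (number of edges) of the cycle u_i P v_i \<union> Q_i.\<close>
definition ext_cycle_len :: "'a list \<Rightarrow> 'a list \<Rightarrow> nat" where
  "ext_cycle_len P Q = (pos P (hi P Q) - pos P (lo P Q)) + (length Q - 1)"

text \<open>Extension (Q_1,...,Q_r) of P, with the tuple given as a list indexed from 0.\<close>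
definition extension :: "nat \<Rightarrow> 'a list \<Rightarrow> 'a list list \<Rightarrow> bool" where
  "extension l P Qs \<longleftrightarrow>
     is_path P \<and> length Qs \<ge> 1 \<and> (\<forall>Q\<in>set Qs. is_H_path P Q) \<and>
     (\<forall>i<length Qs. \<forall>j<length Qs. i \<noteq> j \<longrightarrow> inner (Qs!i) \<inter> set (Qs!j) = {}) \<and>
     (\<forall>i<length Qs. ext_cycle_len P (Qs!i) < l) \<and>
     lo P (Qs!0) = hd P \<and> hi P (Qs!(length Qs - 1)) = last P \<and>
     (\<forall>i. Suc i < length Qs \<longrightarrow>
        pos P (lo P (Qs!i)) < pos P (lo P (Qs!Suc i)) \<and>
        pos P (lo P (Qs!Suc i)) < pos P (hi P (Qs!i)) \<and>
        pos P (hi P (Qs!i)) < pos P (hi P (Qs!Suc i))) \<and>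
     (\<forall>i. Suc (Suc i) < length Qs \<longrightarrow>
        pos P (hi P (Qs!i)) \<le> pos P (lo P (Qs!Suc (Suc i))))"

definition H_verts :: "'a list \<Rightarrow> 'a list list \<Rightarrow> 'a set" where
  "H_verts P Qs = set P \<union> (\<Union>Q\<in>set Qs. set Q)"

definition H_edges :: "'a list \<Rightarrow> 'a list list \<Rightarrow> 'a set set" where
  "H_edges P Qs = path_edges P \<union> (\<Union>Q\<in>set Qs. path_edges Q)"

definition is_cycle_in :: "'a set \<Rightarrow> 'a set set \<Rightarrow> 'a list \<Rightarrow> bool" where
  "is_cycle_in V E C \<longleftrightarrow> distinct C \<and> length C \<ge> 3 \<and> set C \<subseteq> V \<and>
     path_edges C \<subseteq> E \<and> {last C, hd C} \<in> E"

end

theory Submission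
  imports Defs
begin


lemma pe_Nil[simp]: "path_edges [] = {}" by (simp add: path_edges_def)
lemma pe_single[simp]: "path_edges [x] = {}" by (simp add: path_edges_def)
lemma pe_Cons2[simp]: "path_edges (x # y # zs) = insert {x,y} (path_edges (y # zs))"
proof -
  have "path_edges (x # y # zs) = {{(x#y#zs)!i, (x#y#zs)!Suc i} | i. Suc i < length (x#y#zs)}"
    by (simp add: path_edges_def)
  also have "\<dots> = insert {x,y} {{(y#zs)!i, (y#zs)!Suc i} | i. Suc i < length (y#zs)}"
  proof (rule set_eqI, rule iffI)
    fix e assume "e \<in> {{(x#y#zs)!i, (x#y#zs)!Suc i} | i. Suc i < length (x#y#zs)}"
    then obtain i where i: "e = {(x#y#zs)!i, (x#y#zs)!Suc i}" "Suc i < length (x#y#zs)" by blast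
    show "e \<in> insert {x,y} {{(y#zs)!i, (y#zs)!Suc i} | i. Suc i < length (y#zs)}"
    proof (cases i)
      case 0 then show ?thesis using i by simp
    next
      case (Suc i') then show ?thesis using i by auto
    qed
  next
    fix e assume "e \<in> insert {x,y} {{(y#zs)!i, (y#zs)!Suc i} | i. Suc i < length (y#zs)}"
    then show "e \<in> {{(x#y#zs)!i, (x#y#zs)!Suc i} | i. Suc i < length (x#y#zs)}"
    proof
      assume "e = {x,y}" then show ?thesis by (auto intro: exI[of _ 0])
    next
      assume "e \<in> {{(y#zs)!i, (y#zs)!Suc i} | i. Suc i < length (y#zs)}"
      then obtain i where "e = {(y#zs)!i, (y#zs)!Suc i}" "Suc i < length (y#zs)" by blast
      then show ?thesis by (auto intro!: exI[of _ "Suc i"])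
    qed
  qed
  also have "\<dots> = insert {x,y} (path_edges (y#zs))" by (simp add: path_edges_def)
  finally show ?thesis .
qed

lemma pe_Cons: "path_edges (x # xs) = (if xs = [] then {} else insert {x, hd xs} (path_edges xs))"
  by (cases xs) auto

lemma pe_append: "path_edges (xs @ ys) = path_edges xs \<union> path_edges ys \<union>
   (if xs \<noteq> [] \<and> ys \<noteq> [] then {{last xs, hd ys}} else {})"
proof (induction xs)
  case Nil then show ?case by simp
next
  case (Cons x xs) then show ?case by (cases xs; cases ys) (auto simp: pe_Cons)
qed

lemma pe_rev[simp]: "path_edges (rev xs) = path_edges xs"
proof (induction xs)
  case Nil then show ?case by simp
next
  case (Cons x xs)
  have "path_edges (rev (x#xs)) = path_edges (rev xs) \<union> (if xs = [] then {} else {{hd xs, x}})"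
    by (simp add: pe_append last_rev)
  with Cons.IH show ?case by (auto simp: pe_Cons insert_commute)
qed

lemma pe_subset: "e \<in> path_edges xs \<Longrightarrow> e \<subseteq> set xs"
  by (auto simp: path_edges_def)

lemma finite_pe[simp]: "finite (path_edges xs)"
  by (induction xs) (auto simp: pe_Cons)

lemma card_pe: "distinct xs \<Longrightarrow> card (path_edges xs) = length xs - 1"
proof (induction xs)
  case Nil then show ?case by simp
next
  case (Cons x xs)
  show ?case
  proof (cases xs)
    case Nil then show ?thesis by simp
  next
    case (Cons y ys)
    have "{x, y} \<notin> path_edges xs" using pe_subset[of "{x,y}" xs] Cons.prems by auto
    then show ?thesis using Cons Cons.IH Cons.prems by simp
  qed
qed

lemma pe_app_l: "path_edges xs \<subseteq> path_edges (xs @ ys)" by (auto simp: pe_append)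
lemma pe_app_r: "path_edges ys \<subseteq> path_edges (xs @ ys)" by (auto simp: pe_append)

lemma pe_take: "path_edges (take n xs) \<subseteq> path_edges xs"
  using pe_app_l[of "take n xs" "drop n xs"] by simp
lemma pe_drop: "path_edges (drop n xs) \<subseteq> path_edges xs"
  using pe_app_r[of "drop n xs" "take n xs"] by simp
lemma pe_butlast: "path_edges (butlast xs) \<subseteq> path_edges xs"
  by (metis butlast_conv_take pe_take)
lemma pe_tl: "path_edges (tl xs) \<subseteq> path_edges xs"
  by (metis drop_Suc drop_0 pe_drop)

lemma pe_last_edge: "2 \<le> length xs \<Longrightarrow> {last (butlast xs), last xs} \<in> path_edges xs"
proof -
  assume a: "2 \<le> length xs"
  then have ne: "xs \<noteq> []" by auto
  have "length (butlast xs) \<ge> 1" using a by simp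
  then have bne: "butlast xs \<noteq> []" by (cases "butlast xs") auto
  have "path_edges (butlast xs @ [last xs]) = path_edges xs" using append_butlast_last_id[OF ne] by simp
  then show ?thesis using pe_append[of "butlast xs" "[last xs]"] bne by auto
qed

definition cyc :: "'a list \<Rightarrow> 'a set set" where
  "cyc C = insert {last C, hd C} (path_edges C)"

definition crosses :: "'a set \<Rightarrow> 'a set \<Rightarrow> bool" where
  "crosses S e \<longleftrightarrow> (\<exists>a\<in>e. a \<in> S) \<and> (\<exists>b\<in>e. b \<notin> S)"

lemma crosses_pair[simp]: "crosses S {x,y} \<longleftrightarrow> (x \<in> S) \<noteq> (y \<in> S)"
  by (auto simp: crosses_def)

lemma walk_parity: "distinct xs \<Longrightarrow> xs \<noteq> [] \<Longrightarrow>
   even (card {e \<in> path_edges xs. crosses S e}) \<longleftrightarrow> ((hd xs \<in> S) = (last xs \<in> S))"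
proof (induction xs)
  case Nil then show ?case by simp
next
  case (Cons x xs)
  show ?case
  proof (cases xs)
    case Nil then show ?thesis by simp
  next
    case (Cons y ys)
    have nin: "{x, y} \<notin> path_edges xs" using pe_subset[of "{x,y}" xs] Cons.prems Cons by auto
    have IH: "even (card {e \<in> path_edges xs. crosses S e}) \<longleftrightarrow> ((y \<in> S) = (last xs \<in> S))"
      using Cons.IH Cons.prems Cons by simp
    have fin: "finite {e \<in> path_edges xs. crosses S e}" by simp
    show ?thesis
    proof (cases "crosses S {x,y}")
      case True
      then have "{e \<in> path_edges (x#xs). crosses S e} = insert {x,y} {e \<in> path_edges xs. crosses S e}"
        using Cons by auto
      then have "card {e \<in> path_edges (x#xs). crosses S e} = Suc (card {e \<in> path_edges xs. crosses S e})"
        using nin fin by simp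
      then show ?thesis using IH True Cons by auto
    next
      case False
      then have "{e \<in> path_edges (x#xs). crosses S e} = {e \<in> path_edges xs. crosses S e}"
        using Cons by auto
      then show ?thesis using IH False Cons by auto
    qed
  qed
qed

lemma closing_notin: "distinct C \<Longrightarrow> 3 \<le> length C \<Longrightarrow> {last C, hd C} \<notin> path_edges C"
proof
  assume d: "distinct C" and l: "3 \<le> length C" and m: "{last C, hd C} \<in> path_edges C"
  then obtain i where i: "{last C, hd C} = {C!i, C!Suc i}" "Suc i < length C"
    unfolding path_edges_def by blast
  have ne: "C \<noteq> []" using l by auto
  have hd: "hd C = C!0" and lst: "last C = C!(length C - 1)"
    by (simp_all add: hd_conv_nth[OF ne] last_conv_nth[OF ne])
  from i(1) have "(C!(length C - 1) = C!i \<and> C!0 = C!Suc i) \<or> (C!(length C - 1) = C!Suc i \<and> C!0 = C!i)"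
    unfolding hd lst by (auto simp: doubleton_eq_iff)
  moreover have inj: "\<And>p q. p < length C \<Longrightarrow> q < length C \<Longrightarrow> C!p = C!q \<Longrightarrow> p = q"
    using d by (simp add: nth_eq_iff_index_eq)
  ultimately show False
  proof (elim disjE conjE)
    assume h: "C!0 = C!Suc i"
    have "0 = Suc i" using inj[of 0 "Suc i"] h i(2) by linarith
    then show False by simp
  next
    assume h1: "C!(length C - 1) = C!Suc i" and h: "C!0 = C!i"
    have "length C - 1 = Suc i" using inj[of "length C - 1" "Suc i"] h1 i(2) l by auto
    moreover have "0 = i" using inj[of 0 i] h i(2) l by (metis Suc_lessD zero_less_Suc less_trans_Suc)
    ultimately show False using l by auto
  qed
qed

lemma cyc_parity: assumes "distinct C" "3 \<le> length C"
  shows "even (card {e \<in> cyc C. crosses S e})"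
proof -
  have ne: "C \<noteq> []" using assms by auto
  have nin: "{last C, hd C} \<notin> path_edges C" using closing_notin assms .
  have W: "even (card {e \<in> path_edges C. crosses S e}) \<longleftrightarrow> ((hd C \<in> S) = (last C \<in> S))"
    using walk_parity assms ne by blast
  have fin: "finite {e \<in> path_edges C. crosses S e}" by simp
  show ?thesis
  proof (cases "crosses S {last C, hd C}")
    case True
    then have "{e \<in> cyc C. crosses S e} = insert {last C, hd C} {e \<in> path_edges C. crosses S e}"
      by (auto simp: cyc_def)
    then show ?thesis using nin fin W True by auto
  next
    case False
    then have "{e \<in> cyc C. crosses S e} = {e \<in> path_edges C. crosses S e}"
      by (auto simp: cyc_def)
    then show ?thesis using W False by auto
  qed
qed

lemma card_cyc: "distinct C \<Longrightarrow> 3 \<le> length C \<Longrightarrow> card (cyc C) = length C"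
  using closing_notin[of C] card_pe[of C] by (simp add: cyc_def)

lemma cyc_subset: "C \<noteq> [] \<Longrightarrow> e \<in> cyc C \<Longrightarrow> e \<subseteq> set C"
  by (auto simp: cyc_def dest: pe_subset)

lemma walk_sep: "x \<in> set xs \<Longrightarrow> x \<in> L \<Longrightarrow> y \<in> set xs \<Longrightarrow> y \<notin> L \<Longrightarrow>
    \<exists>a b. {a,b} \<in> path_edges xs \<and> a \<in> L \<and> b \<notin> L"
proof (induction xs arbitrary: x y)
  case Nil then show ?case by simp
next
  case (Cons z zs)
  note IH = Cons.IH and prems = Cons.prems
  show ?case
  proof (cases zs)
    case Nil then show ?thesis using prems by auto
  next
    case (Cons w ws)
    note zs = this
    have sub: "path_edges zs \<subseteq> path_edges (z#zs)" using zs by auto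
    have zw: "{z,w} \<in> path_edges (z#zs)" using zs by simp
    have wz: "{w,z} \<in> path_edges (z#zs)" using zs by (simp add: insert_commute)
    have w: "w \<in> set zs" using zs by simp
    show ?thesis
    proof (cases "z \<in> L")
      case True
      then have "y \<in> set zs" using prems by auto
      show ?thesis
      proof (cases "w \<in> L")
        case True
        then obtain a b where "{a,b} \<in> path_edges zs" "a \<in> L" "b \<notin> L"
          using IH[of w y] \<open>y \<in> set zs\<close> w prems(4) by blast
        then show ?thesis using sub by blast
      next
        case False then show ?thesis using \<open>z \<in> L\<close> zw by blast
      qed
    next
      case False
      then have "x \<in> set zs" using prems by auto
      show ?thesis
      proof (cases "w \<in> L")
        case True
        then show ?thesis using wz \<open>z \<notin> L\<close> by blast
      next
        case False
        then obtain a b where "{a,b} \<in> path_edges zs" "a \<in> L" "b \<notin> L"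
          using IH[of x w] \<open>x \<in> set zs\<close> w prems(2) by blast
        then show ?thesis using sub by blast
      qed
    qed
  qed
qed

lemma cyc_sep:
  assumes d: "distinct C" and wL: "w \<notin> L" and x: "x \<in> set C" "x \<in> L"
    and y: "y \<in> set C" "y \<notin> L" "y \<noteq> w"
    and E: "\<And>a b. {a,b} \<in> cyc C \<Longrightarrow> a \<in> L \<Longrightarrow> b \<notin> L \<Longrightarrow> b = w"
  shows False
proof (cases "w \<in> set C")
  case False
  obtain a b where ab: "{a,b} \<in> path_edges C" "a \<in> L" "b \<notin> L" using walk_sep[OF x y(1,2)] by blast
  then have "b \<in> set C" using pe_subset by fastforce
  moreover have "b = w" using E ab by (auto simp: cyc_def)
  ultimately show False using False by simp
next
  case True
  then obtain xs ys where C: "C = xs @ w # ys" by (meson split_list)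
  have "x \<in> set (ys @ xs)" "y \<in> set (ys @ xs)" using x y C wL by auto
  then obtain a b where ab: "{a,b} \<in> path_edges (ys @ xs)" "a \<in> L" "b \<notin> L"
    using walk_sep x y by meson
  have "b \<in> set (ys @ xs)" using pe_subset ab by fastforce
  then have bw: "b \<noteq> w" using d C by auto
  have s1: "path_edges xs \<subseteq> cyc C" using pe_app_l[of xs "w#ys"] C by (auto simp: cyc_def)
  have "path_edges ys \<subseteq> path_edges (w#ys)" by (auto simp: pe_Cons)
  then have s2: "path_edges ys \<subseteq> cyc C" using pe_app_r[of "w#ys" xs] C by (auto simp: cyc_def)
  have s3: "xs \<noteq> [] \<Longrightarrow> ys \<noteq> [] \<Longrightarrow> {last ys, hd xs} \<in> cyc C"
    using C by (simp add: cyc_def)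
  have "path_edges (ys @ xs) \<subseteq> cyc C"
    unfolding pe_append using s1 s2 s3 by auto
  then have "b = w" using E[of a b] ab by blast
  then show False using bw by simp
qed



lemma tl_rev': "tl (rev xs) = rev (butlast xs)"
  by (metis butlast_rev rev_rev_ident)

lemma inner_rev[simp]: "inner (rev xs) = inner xs"
  by (simp add: inner_def tl_rev' butlast_tl)

lemma inner_nth: "x \<in> inner xs \<longleftrightarrow> (\<exists>i. 0 < i \<and> i < length xs - 1 \<and> x = xs!i)"
proof
  assume "x \<in> inner xs"
  then obtain j where j: "j < length (butlast (tl xs))" "x = butlast (tl xs) ! j"
    by (auto simp: inner_def in_set_conv_nth)
  then have "x = xs ! Suc j" "Suc j < length xs - 1" by (auto simp: nth_butlast nth_tl)
  then show "\<exists>i. 0 < i \<and> i < length xs - 1 \<and> x = xs!i" by blast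
next
  assume "\<exists>i. 0 < i \<and> i < length xs - 1 \<and> x = xs!i"
  then obtain i where i: "0 < i" "i < length xs - 1" "x = xs!i" by blast
  then have "i - 1 < length (butlast (tl xs))" "butlast (tl xs) ! (i - 1) = xs ! i"
    by (auto simp: nth_butlast nth_tl)
  then show "x \<in> inner xs" unfolding inner_def using i(3) by (metis nth_mem)
qed

lemma set_hd_last_inner: "2 \<le> length xs \<Longrightarrow> set xs = {hd xs, last xs} \<union> inner xs"
proof -
  assume a: "2 \<le> length xs"
  then obtain x ys where xs: "xs = x # ys" by (cases xs) auto
  have ys: "ys \<noteq> []" using a xs by auto
  have "ys = butlast ys @ [last ys]" using ys by simp
  then have "set ys = set (butlast ys) \<union> {last ys}" by (metis Un_insert_right empty_set list.simps(15) set_append sup_bot.right_neutral)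
  then show ?thesis using xs ys by (auto simp: inner_def)
qed

lemma vert_edge: "2 \<le> length xs \<Longrightarrow> v \<in> set xs \<Longrightarrow> \<exists>e\<in>path_edges xs. v \<in> e"
proof -
  assume a: "2 \<le> length xs" "v \<in> set xs"
  then obtain i where i: "i < length xs" "v = xs!i" by (auto simp: in_set_conv_nth)
  show ?thesis
  proof (cases "Suc i < length xs")
    case True then show ?thesis using i by (auto simp: path_edges_def)
  next
    case False
    then have "Suc (i - 1) < length xs" "Suc (i - 1) = i" using i a by auto
    then show ?thesis using i unfolding path_edges_def by (metis (mono_tags, lifting) insertCI mem_Collect_eq)
  qed
qed

lemma take_mem: "distinct P \<Longrightarrow> q < length P \<Longrightarrow> (P!q \<in> set (take n P)) = (q < n)"
proof -
  assume d: "distinct P" and q: "q < length P"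
  have "(P!q \<in> set (take n P)) = (\<exists>j < min n (length P). P!j = P!q)"
    by (auto simp: in_set_conv_nth)
  also have "\<dots> = (q < n)" using d q by (auto simp: nth_eq_iff_index_eq)
  finally show ?thesis .
qed

lemma UN_nth: "(\<Union>x\<in>set xs. f x) = (\<Union>i<length xs. f (xs!i))"
proof
  show "(\<Union>x\<in>set xs. f x) \<subseteq> (\<Union>i<length xs. f (xs!i))" by (auto simp: in_set_conv_nth)
  show "(\<Union>i<length xs. f (xs!i)) \<subseteq> (\<Union>x\<in>set xs. f x)" by (blast intro: nth_mem)
qed

locale ext_loc =
  fixes l :: nat and P :: "'a list" and Qs :: "'a list list"
  assumes ext: "extension l P Qs"
begin

abbreviation "r \<equiv> length Qs"
definition a where "a k = pos P (lo P (Qs!k))"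
definition b where "b k = pos P (hi P (Qs!k))"
abbreviation "V \<equiv> H_verts P Qs"
abbreviation "E \<equiv> H_edges P Qs"
definition QE where "QE = (\<Union>k<length Qs. path_edges (Qs!k))"
definition Qhl where "Qhl k = (if pos P (hd (Qs!k)) < pos P (last (Qs!k)) then rev (Qs!k) else Qs!k)"

lemma distP: "distinct P" and Pne: "P \<noteq> []"
  using ext by (auto simp: extension_def is_path_def)

lemma Qpath: "k < r \<Longrightarrow> is_H_path P (Qs!k)"
  using ext by (auto simp: extension_def)

lemma Qdist: "k < r \<Longrightarrow> distinct (Qs!k)" and Qlen: "k < r \<Longrightarrow> 2 \<le> length (Qs!k)"
  and Qhd: "k < r \<Longrightarrow> hd (Qs!k) \<in> set P" and Qlast: "k < r \<Longrightarrow> last (Qs!k) \<in> set P"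
  and Qinner: "k < r \<Longrightarrow> inner (Qs!k) \<inter> set P = {}"
  and Qlen2: "k < r \<Longrightarrow> length (Qs!k) = 2 \<Longrightarrow> {hd (Qs!k), last (Qs!k)} \<notin> path_edges P"
  using Qpath[of k] by (auto simp: is_H_path_def is_path_def)

lemma Qdisj: "k < r \<Longrightarrow> k' < r \<Longrightarrow> k \<noteq> k' \<Longrightarrow> inner (Qs!k) \<inter> set (Qs!k') = {}"
  using ext by (auto simp: extension_def)

lemma pos_nth: "i < length P \<Longrightarrow> pos P (P!i) = i"
  unfolding pos_def by (rule the_equality) (auto simp: distP nth_eq_iff_index_eq)

lemma pos_mem: "x \<in> set P \<Longrightarrow> pos P x < length P \<and> P ! pos P x = x"
proof -
  assume "x \<in> set P"
  then obtain i where "i < length P" "P!i = x" by (auto simp: in_set_conv_nth)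
  then show ?thesis using pos_nth by auto
qed

lemma hd_ne_last: "k < r \<Longrightarrow> hd (Qs!k) \<noteq> last (Qs!k)"
proof -
  assume k: "k < r"
  have ne: "Qs!k \<noteq> []" using Qlen[OF k] by auto
  have i1: "(0::nat) < length (Qs!k)" and i2: "length (Qs!k) - 1 < length (Qs!k)"
    and i3: "(0::nat) \<noteq> length (Qs!k) - 1" using Qlen[OF k] by auto
  have "Qs!k!0 \<noteq> Qs!k!(length (Qs!k) - 1)"
    using nth_eq_iff_index_eq[OF Qdist[OF k] i1 i2] i3 by simp
  then show ?thesis by (simp add: hd_conv_nth[OF ne] last_conv_nth[OF ne])
qed

lemma ab: "k < r \<Longrightarrow> a k < b k \<and> b k < length P \<and> P!(a k) = lo P (Qs!k) \<and> P!(b k) = hi P (Qs!k)"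
proof -
  assume k: "k < r"
  have "pos P (hd (Qs!k)) \<noteq> pos P (last (Qs!k))"
    using pos_mem[OF Qhd[OF k]] pos_mem[OF Qlast[OF k]] hd_ne_last[OF k] by metis
  then show ?thesis using pos_mem[OF Qhd[OF k]] pos_mem[OF Qlast[OF k]]
    by (auto simp: a_def b_def lo_def hi_def)
qed

lemma lohi: "k < r \<Longrightarrow> {P!(a k), P!(b k)} = {hd (Qs!k), last (Qs!k)}"
  using ab[of k] by (auto simp: lo_def hi_def)

lemma setQ: "k < r \<Longrightarrow> set (Qs!k) = {P!(a k), P!(b k)} \<union> inner (Qs!k)"
  using set_hd_last_inner[OF Qlen] lohi by simp

lemma Qhl: "k < r \<Longrightarrow> hd (Qhl k) = P!(b k) \<and> last (Qhl k) = P!(a k) \<and> distinct (Qhl k) \<and>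
   set (Qhl k) = set (Qs!k) \<and> path_edges (Qhl k) = path_edges (Qs!k) \<and>
   length (Qhl k) = length (Qs!k) \<and> inner (Qhl k) = inner (Qs!k)"
proof -
  assume k: "k < r"
  have ne: "Qs!k \<noteq> []" using Qlen[OF k] by auto
  show ?thesis using ab[OF k] Qdist[OF k] ne
    by (auto simp: Qhl_def lo_def hi_def hd_rev last_rev a_def b_def split: if_splits)
qed

lemma ecl: "k < r \<Longrightarrow> b k - a k + (length (Qs!k) - 1) < l"
  using ext by (auto simp: extension_def ext_cycle_len_def a_def b_def)

lemma E4: "Suc k < r \<Longrightarrow> a k < a (Suc k) \<and> a (Suc k) < b k \<and> b k < b (Suc k)"
  using ext by (auto simp: extension_def a_def b_def)

lemma E5: "Suc (Suc k) < r \<Longrightarrow> b k \<le> a (Suc (Suc k))"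
  using ext by (auto simp: extension_def a_def b_def)

lemma a_mono: "k < k' \<Longrightarrow> k' < r \<Longrightarrow> a k < a k'"
proof (induction k' arbitrary: k)
  case 0 then show ?case by simp
next
  case (Suc k')
  show ?case
  proof (cases "k = k'")
    case True then show ?thesis using E4[of k'] Suc by auto
  next
    case False
    then have "a k < a k'" using Suc by auto
    then show ?thesis using E4[of k'] Suc by auto
  qed
qed

lemma b_mono: "k < k' \<Longrightarrow> k' < r \<Longrightarrow> b k < b k'"
proof (induction k' arbitrary: k)
  case 0 then show ?case by simp
next
  case (Suc k')
  show ?case
  proof (cases "k = k'")
    case True then show ?thesis using E4[of k'] Suc by auto
  next
    case False
    then have "b k < b k'" using Suc by auto
    then show ?thesis using E4[of k'] Suc by auto
  qed
qed

lemma b_le_a: "Suc (Suc k) \<le> k' \<Longrightarrow> k' < r \<Longrightarrow> b k \<le> a k'"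
proof -
  assume "Suc (Suc k) \<le> k'" "k' < r"
  then show ?thesis using E5[of k] a_mono[of "Suc (Suc k)" k']
    by (cases "k' = Suc (Suc k)") auto
qed

lemma E_char: "E = path_edges P \<union> QE"
  by (simp add: H_edges_def QE_def UN_nth)

lemma V_char: "x \<in> V \<longleftrightarrow> x \<in> set P \<or> (\<exists>k<r. x \<in> set (Qs!k))"
  by (auto simp: H_verts_def UN_nth)

end


context ext_loc begin

abbreviation cycle where "cycle C \<equiv> is_cycle_in V E C"

lemma cycle_iff: "cycle C \<longleftrightarrow> distinct C \<and> 3 \<le> length C \<and> set C \<subseteq> V \<and> cyc C \<subseteq> E"
  by (auto simp: is_cycle_in_def cyc_def)

lemma E_at_inner:
  assumes k: "k < r" and t: "Suc (Suc t) < length (Qs!k)" and e: "e \<in> E" and x: "Qs!k!Suc t \<in> e"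
  shows "e = {Qs!k!t, Qs!k!Suc t} \<or> e = {Qs!k!Suc t, Qs!k!Suc (Suc t)}"
proof -
  let ?Q = "Qs!k"
  have xi: "?Q!Suc t \<in> inner ?Q" unfolding inner_nth using t by (intro exI[of _ "Suc t"]) auto
  then have xP: "?Q!Suc t \<notin> set P" using Qinner[OF k] by auto
  from e consider "e \<in> path_edges P" | k' where "k' < r" "e \<in> path_edges (Qs!k')"
    unfolding E_char QE_def by blast
  then show ?thesis
  proof cases
    case 1 then show ?thesis using pe_subset[OF 1] x xP by auto
  next
    case 2
    show ?thesis
    proof (cases "k' = k")
      case False
      then show ?thesis using Qdisj[OF k 2(1)] pe_subset[OF 2(2)] x xi by auto
    next
      case True
      then obtain i where i: "e = {?Q!i, ?Q!Suc i}" "Suc i < length ?Q"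
        using 2 unfolding path_edges_def by blast
      have inj: "\<And>p q. p < length ?Q \<Longrightarrow> q < length ?Q \<Longrightarrow> ?Q!p = ?Q!q \<Longrightarrow> p = q"
        using Qdist[OF k] by (simp add: nth_eq_iff_index_eq)
      from x i have "?Q!Suc t = ?Q!i \<or> ?Q!Suc t = ?Q!Suc i" by auto
      then have "Suc t = i \<or> Suc t = Suc i" using inj[of "Suc t" i] inj[of "Suc t" "Suc i"] i(2) t by auto
      then show ?thesis using i by auto
    qed
  qed
qed

lemma switch_const: "(\<forall>t. Suc t < n \<longrightarrow> (f t \<longleftrightarrow> f (Suc t))) \<Longrightarrow> t < n \<Longrightarrow> f t = f 0"
  by (induction t) auto

lemma AON:
  assumes C: "cycle C" and k: "k < r"
  shows "path_edges (Qs!k) \<subseteq> cyc C \<or> path_edges (Qs!k) \<inter> cyc C = {}"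
proof (rule ccontr)
  let ?Q = "Qs!k"
  let ?f = "\<lambda>t. {?Q!t, ?Q!Suc t} \<in> cyc C"
  assume "\<not> ?thesis"
  then obtain t1 t2 where t1: "Suc t1 < length ?Q" "?f t1" and t2: "Suc t2 < length ?Q" "\<not> ?f t2"
    unfolding path_edges_def by blast
  have "\<exists>t. Suc (Suc t) < length ?Q \<and> (?f t \<noteq> ?f (Suc t))"
  proof (rule ccontr)
    assume "\<not> ?thesis"
    then have h: "\<forall>t. Suc t < length ?Q - 1 \<longrightarrow> (?f t \<longleftrightarrow> ?f (Suc t))" by auto
    have "t1 < length ?Q - 1" "t2 < length ?Q - 1" using t1(1) t2(1) by auto
    then have "?f t1 = ?f 0" "?f t2 = ?f 0"
      using switch_const[where n="length ?Q - 1" and f="?f", OF h] by blast+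
    then show False using t1 t2 by simp
  qed
  then obtain t where t: "Suc (Suc t) < length ?Q" "?f t \<noteq> ?f (Suc t)" by blast
  let ?x = "?Q!Suc t"
  let ?e1 = "{?Q!t, ?Q!Suc t}" and ?e2 = "{?Q!Suc t, ?Q!Suc (Suc t)}"
  have inj: "\<And>p q. p < length ?Q \<Longrightarrow> q < length ?Q \<Longrightarrow> ?Q!p = ?Q!q \<Longrightarrow> p = q"
    using Qdist[OF k] by (simp add: nth_eq_iff_index_eq)
  have n1: "?Q!t \<noteq> ?x" using inj[of t "Suc t"] t(1) by auto
  have n2: "?Q!Suc (Suc t) \<noteq> ?x" using inj[of "Suc (Suc t)" "Suc t"] t(1) by auto
  have n3: "?Q!t \<noteq> ?Q!Suc (Suc t)" using inj[of t "Suc (Suc t)"] t(1) by auto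
  have cE: "cyc C \<subseteq> E" using C cycle_iff by blast
  have "{e \<in> cyc C. crosses {?x} e} = {e \<in> {?e1, ?e2}. e \<in> cyc C}"
  proof (rule set_eqI, rule iffI)
    fix e assume "e \<in> {e \<in> cyc C. crosses {?x} e}"
    then have "e \<in> cyc C" "?x \<in> e" by (auto simp: crosses_def)
    then show "e \<in> {e \<in> {?e1, ?e2}. e \<in> cyc C}" using E_at_inner[OF k t(1), of e] cE by auto
  next
    fix e assume "e \<in> {e \<in> {?e1, ?e2}. e \<in> cyc C}"
    then show "e \<in> {e \<in> cyc C. crosses {?x} e}" using n1 n2 by auto
  qed
  moreover have "card {e \<in> {?e1, ?e2}. e \<in> cyc C} = 1"
  proof -
    have "?e1 \<noteq> ?e2" using n1 n3 by (auto simp: doubleton_eq_iff)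
    show ?thesis
    proof (cases "?f t")
      case True
      then have "{e \<in> {?e1, ?e2}. e \<in> cyc C} = {?e1}" using t(2) by auto
      then show ?thesis by simp
    next
      case False
      then have "{e \<in> {?e1, ?e2}. e \<in> cyc C} = {?e2}" using t(2) by auto
      then show ?thesis by simp
    qed
  qed
  ultimately have "card {e \<in> cyc C. crosses {?x} e} = 1" by simp
  moreover have "even (card {e \<in> cyc C. crosses {?x} e})"
    using cyc_parity C cycle_iff by blast
  ultimately show False by simp
qed

lemma PE_notin_QE: "e \<in> path_edges P \<Longrightarrow> e \<notin> QE"
proof
  assume eP: "e \<in> path_edges P" and "e \<in> QE"
  then obtain k where k: "k < r" and eQ: "e \<in> path_edges (Qs!k)" unfolding QE_def by blast
  let ?Q = "Qs!k"
  obtain p where p: "e = {P!p, P!Suc p}" "Suc p < length P" using eP unfolding path_edges_def by blast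
  have ne: "P!p \<noteq> P!Suc p" using distP p(2) by (simp add: nth_eq_iff_index_eq)
  have sub: "e \<subseteq> {hd ?Q, last ?Q}"
    using pe_subset[OF eQ] pe_subset[OF eP] set_hd_last_inner[OF Qlen[OF k]] Qinner[OF k] by blast
  then have eq: "e = {hd ?Q, last ?Q}" using p ne by (auto simp: doubleton_eq_iff)
  show False
  proof (cases "length ?Q = 2")
    case True then show False using Qlen2[OF k] eq eP by simp
  next
    case False
    then have "3 \<le> length ?Q" using Qlen[OF k] by simp
    then show False using closing_notin[OF Qdist[OF k]] eq eQ by (simp add: insert_commute)
  qed
qed

lemma EP:
  assumes C: "cycle C" and p: "Suc p < length P"
  shows "{P!p, P!Suc p} \<in> cyc C \<longleftrightarrow>
     odd (card {e \<in> cyc C \<inter> QE. crosses (set (take (Suc p) P)) e})"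
proof -
  let ?S = "set (take (Suc p) P)" and ?ep = "{P!p, P!Suc p}"
  have epP: "?ep \<in> path_edges P" using p unfolding path_edges_def by blast
  have epQ: "?ep \<notin> QE" using PE_notin_QE[OF epP] .
  have cE: "cyc C \<subseteq> E" using C cycle_iff by blast
  have mem: "\<And>q. q < length P \<Longrightarrow> (P!q \<in> ?S) = (q < Suc p)" using take_mem[OF distP] by blast
  have eq: "{e \<in> cyc C. crosses ?S e} = {e \<in> cyc C \<inter> QE. crosses ?S e} \<union> ({?ep} \<inter> cyc C)"
  proof (rule set_eqI, rule iffI)
    fix e assume e: "e \<in> {e \<in> cyc C. crosses ?S e}"
    show "e \<in> {e \<in> cyc C \<inter> QE. crosses ?S e} \<union> ({?ep} \<inter> cyc C)"
    proof (cases "e \<in> QE")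
      case True then show ?thesis using e by auto
    next
      case False
      then have "e \<in> path_edges P" using e cE E_char by auto
      then obtain q where q: "e = {P!q, P!Suc q}" "Suc q < length P" unfolding path_edges_def by blast
      then have "(q < Suc p) \<noteq> (Suc q < Suc p)" using e mem[of q] mem[of "Suc q"] by auto
      then have "q = p" by auto
      then show ?thesis using e q by auto
    qed
  next
    fix e assume "e \<in> {e \<in> cyc C \<inter> QE. crosses ?S e} \<union> ({?ep} \<inter> cyc C)"
    then show "e \<in> {e \<in> cyc C. crosses ?S e}" using mem[of p] mem[of "Suc p"] p by auto
  qed
  have fin: "finite {e \<in> cyc C \<inter> QE. crosses ?S e}" by (simp add: cyc_def)
  have disj: "{e \<in> cyc C \<inter> QE. crosses ?S e} \<inter> ({?ep} \<inter> cyc C) = {}" using epQ by auto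
  have "card {e \<in> cyc C. crosses ?S e} = card {e \<in> cyc C \<inter> QE. crosses ?S e} + card ({?ep} \<inter> cyc C)"
    unfolding eq using card_Un_disjoint[OF fin _ disj] by simp
  moreover have "even (card {e \<in> cyc C. crosses ?S e})" using cyc_parity C cycle_iff by blast
  moreover have "card ({?ep} \<inter> cyc C) = (if ?ep \<in> cyc C then 1 else 0)" by auto
  ultimately show ?thesis by (auto split: if_splits)
qed

lemma edges_sub:
  assumes C: "cycle C" and D: "cycle D" and eq: "cyc C \<inter> QE = cyc D \<inter> QE"
  shows "cyc C \<subseteq> cyc D"
proof
  fix e assume e: "e \<in> cyc C"
  show "e \<in> cyc D"
  proof (cases "e \<in> QE")
    case True then show ?thesis using e eq by blast
  next
    case False
    then have "e \<in> path_edges P" using e C cycle_iff E_char by blast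
    then obtain p where p: "e = {P!p, P!Suc p}" "Suc p < length P" unfolding path_edges_def by blast
    show ?thesis using EP[OF C p(2)] EP[OF D p(2)] e p(1) eq by simp
  qed
qed

lemma edges_eq: "cycle C \<Longrightarrow> cycle D \<Longrightarrow> cyc C \<inter> QE = cyc D \<inter> QE \<Longrightarrow> cyc C = cyc D"
  using edges_sub by (metis subset_antisym)

lemma cyc_QE_ne: assumes C: "cycle C" shows "cyc C \<inter> QE \<noteq> {}"
proof
  assume emp: "cyc C \<inter> QE = {}"
  let ?e = "{last C, hd C}"
  have e: "?e \<in> cyc C" by (simp add: cyc_def)
  then have "?e \<in> path_edges P" using emp C cycle_iff E_char by blast
  then obtain p where p: "?e = {P!p, P!Suc p}" "Suc p < length P" unfolding path_edges_def by blast
  show False using EP[OF C p(2)] e p(1) emp by simp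
qed

definition U where "U C = {k. k < r \<and> path_edges (Qs!k) \<subseteq> cyc C}"

lemma cycQE_U: assumes C: "cycle C" shows "cyc C \<inter> QE = (\<Union>k\<in>U C. path_edges (Qs!k))"
proof (rule set_eqI, rule iffI)
  fix e assume "e \<in> cyc C \<inter> QE"
  then obtain k where k: "k < r" "e \<in> path_edges (Qs!k)" "e \<in> cyc C" unfolding QE_def by blast
  then have "k \<in> U C" using AON[OF C k(1)] by (auto simp: U_def)
  then show "e \<in> (\<Union>k\<in>U C. path_edges (Qs!k))" using k by blast
next
  fix e assume "e \<in> (\<Union>k\<in>U C. path_edges (Qs!k))"
  then show "e \<in> cyc C \<inter> QE" by (auto simp: U_def QE_def)
qed

lemma U_ne: assumes C: "cycle C" shows "U C \<noteq> {}"
  using cyc_QE_ne[OF C] cycQE_U[OF C] by auto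

end


lemma inner_sub: "inner xs \<subseteq> set xs"
  by (cases xs) (auto simp: inner_def dest: in_set_butlastD)

lemma set_butlast_dist: "distinct xs \<Longrightarrow> set (butlast xs) = set xs - {last xs}"
proof (cases "xs = []")
  case False
  assume d: "distinct xs"
  have "xs = butlast xs @ [last xs]" using False by simp
  then have "distinct (butlast xs @ [last xs])" "set xs = set (butlast xs) \<union> {last xs}"
    using d by (metis, metis Un_insert_right empty_set list.simps(15) set_append sup_bot.right_neutral)
  then show ?thesis by auto
qed simp

lemma hd_butlast: "2 \<le> length xs \<Longrightarrow> hd (butlast xs) = hd xs"
  by (cases xs) auto

context ext_loc begin

lemma ab': "k < r \<Longrightarrow> a k < b k \<and> b k < length P"
  using ab by blast

lemma pedge: "Suc p < length P \<Longrightarrow> {P!p, P!Suc p} \<in> E"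
  unfolding E_char path_edges_def by blast

lemma seg_len: "y \<le> length P \<Longrightarrow> length (drop x (take y P)) = y - x" by simp
lemma seg_nth: "y \<le> length P \<Longrightarrow> t < y - x \<Longrightarrow> drop x (take y P) ! t = P!(x+t)" by simp
lemma seg_dist: "distinct (drop x (take y P))" using distP by (simp add: distinct_take distinct_drop)
lemma seg_pe: "path_edges (drop x (take y P)) \<subseteq> E"
  using pe_drop pe_take E_char by blast

lemma seg_set: assumes "y \<le> length P"
  shows "z \<in> set (drop x (take y P)) \<longleftrightarrow> z \<in> set P \<and> x \<le> pos P z \<and> pos P z < y"
proof
  assume "z \<in> set (drop x (take y P))"
  then obtain t where t: "t < y - x" "z = P!(x+t)" using assms by (auto simp: in_set_conv_nth)
  then show "z \<in> set P \<and> x \<le> pos P z \<and> pos P z < y" using pos_nth[of "x+t"] assms by auto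
next
  assume h: "z \<in> set P \<and> x \<le> pos P z \<and> pos P z < y"
  then have "drop x (take y P) ! (pos P z - x) = z" "pos P z - x < length (drop x (take y P))"
    using pos_mem[of z] assms by auto
  then show "z \<in> set (drop x (take y P))" by (metis nth_mem)
qed

lemma seg_hd: "x < y \<Longrightarrow> y \<le> length P \<Longrightarrow> hd (drop x (take y P)) = P!x"
  by (simp add: hd_drop_conv_nth)

lemma seg_last: "x < y \<Longrightarrow> y \<le> length P \<Longrightarrow> last (drop x (take y P)) = P!(y - 1)"
proof -
  assume h: "x < y" "y \<le> length P"
  then have ne: "drop x (take y P) \<noteq> []" by simp
  then show ?thesis using h by (simp add: last_conv_nth)
qed

lemma vert_in_cyc: "k < r \<Longrightarrow> v \<in> set (Qs!k) \<Longrightarrow> path_edges (Qs!k) \<subseteq> cyc C \<Longrightarrow> C \<noteq> [] \<Longrightarrow> v \<in> set C"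
  using vert_edge[OF Qlen, of k v] cyc_subset[of C] by blast

lemma U_interval:
  assumes C: "cycle C" and i: "i \<in> U C" and j: "j \<in> U C" and im: "i < m" and mj: "m < j"
  shows "m \<in> U C"
proof (rule ccontr)
  assume mU: "m \<notin> U C"
  have jr: "j < r" using j by (auto simp: U_def)
  have mr: "m < r" using mj jr by simp
  obtain m' where m': "m = Suc m'" using im by (cases m) auto
  define q where "q = b m'"
  define L where "L = set (take q P) \<union> (\<Union>k<m. inner (Qs!k))"
  define w where "w = P!q"
  have qP: "q < length P" using ab'[of m'] mr m' q_def by auto
  have Cne: "C \<noteq> []" and dC: "distinct C" and cE: "cyc C \<subseteq> E" using C cycle_iff by auto
  have memL: "\<And>p. p < length P \<Longrightarrow> (P!p \<in> L) = (p < q)"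
  proof -
    fix p assume p: "p < length P"
    have "P!p \<notin> (\<Union>k<m. inner (Qs!k))"
    proof
      assume "P!p \<in> (\<Union>k<m. inner (Qs!k))"
      then obtain k where "k < m" "P!p \<in> inner (Qs!k)" by blast
      moreover have "P!p \<in> set P" using p by simp
      ultimately show False using Qinner[of k] mr by auto
    qed
    then show "(P!p \<in> L) = (p < q)" using take_mem[OF distP p] by (auto simp: L_def)
  qed
  have memLP: "\<And>z. z \<in> set P \<Longrightarrow> (z \<in> L) = (pos P z < q)"
    using memL pos_mem by metis
  have wL: "w \<notin> L" using memL[OF qP] by (simp add: w_def)
  have mAON: "path_edges (Qs!m) \<inter> cyc C = {}" using AON[OF C mr] mU mr by (auto simp: U_def)
  have bq: "\<And>k. k < m \<Longrightarrow> b k \<le> q"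
    using b_mono[of _ m'] m' mr q_def by (metis le_eq_less_or_eq less_Suc_eq_le less_imp_le_nat Suc_lessD)
  have m2: "Suc m \<le> j" using mj by simp
  have aq: "\<And>k. m < k \<Longrightarrow> k < r \<Longrightarrow> q \<le> a k"
    using b_le_a[of m'] m' q_def by simp
  have i1: "i < r" "path_edges (Qs!i) \<subseteq> cyc C" and j1: "path_edges (Qs!j) \<subseteq> cyc C"
    using i j by (auto simp: U_def)
  have x: "P!(a i) \<in> set C" using vert_in_cyc[OF i1(1) _ i1(2) Cne] setQ[OF i1(1)] by auto
  have ai: "a i < q" "a i < length P" using ab'[OF i1(1)] bq[of i] im by auto
  have xL: "P!(a i) \<in> L" using memL[OF ai(2)] ai(1) by blast
  have y: "P!(b j) \<in> set C" using vert_in_cyc[OF jr _ j1 Cne] setQ[OF jr] by auto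
  have bjq: "q < b j"
  proof -
    have "q \<le> a j" using aq[of j] mj jr by simp
    then show ?thesis using ab'[OF jr] by simp
  qed
  have yL: "P!(b j) \<notin> L" using memL ab'[OF jr] bjq by auto
  have yw: "P!(b j) \<noteq> w" using bjq ab'[OF jr] distP qP by (auto simp: w_def nth_eq_iff_index_eq)
  show False
  proof (rule cyc_sep[OF dC wL x xL y yL yw])
    fix u v assume uv: "{u,v} \<in> cyc C" and uL: "u \<in> L" and vL: "v \<notin> L"
    have "{u,v} \<in> E" using uv cE by blast
    then consider "{u,v} \<in> path_edges P" | k where "k < r" "{u,v} \<in> path_edges (Qs!k)"
      unfolding E_char QE_def by blast
    then show "v = w"
    proof cases
      case 1
      then obtain p where p: "{u,v} = {P!p, P!Suc p}" "Suc p < length P" unfolding path_edges_def by blast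
      then consider "u = P!p" "v = P!Suc p" | "u = P!Suc p" "v = P!p" by (auto simp: doubleton_eq_iff)
      then show ?thesis
      proof cases
        case 1
        have "p < q" "\<not> Suc p < q" using memL[of p] memL[of "Suc p"] p(2) uL vL 1 by auto
        then have "Suc p = q" by simp
        then show ?thesis using 1 by (simp add: w_def)
      next
        case 2 then show ?thesis using memL[of p] memL[of "Suc p"] p(2) uL vL by auto
      qed
    next
      case 2
      note k = 2
      have uQ: "u \<in> set (Qs!k)" and vQ: "v \<in> set (Qs!k)" using pe_subset[OF k(2)] by auto
      consider "k < m" | "k = m" | "m < k" by linarith
      then show ?thesis
      proof cases
        case 1
        have "v \<notin> inner (Qs!k)" using vL 1 by (auto simp: L_def)
        then have "v = P!(a k) \<or> v = P!(b k)" using vQ setQ[OF k(1)] by auto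
        then show ?thesis
        proof
          assume "v = P!(a k)" then show ?thesis using memL[of "a k"] vL ab'[OF k(1)] bq[OF 1] by auto
        next
          assume v: "v = P!(b k)"
          then have "\<not> b k < q" using memL[of "b k"] vL ab'[OF k(1)] by auto
          then show ?thesis using v bq[OF 1] by (auto simp: w_def)
        qed
      next
        case 2 then show ?thesis using mAON k uv by auto
      next
        case 3
        have "u \<notin> inner (Qs!k)"
        proof
          assume ui: "u \<in> inner (Qs!k)"
          then have "u \<notin> set P" using Qinner[OF k(1)] by auto
          then obtain k' where "k' < m" "u \<in> inner (Qs!k')" using uL by (auto simp: L_def dest: in_set_takeD)
          then show False using Qdisj[of k' k] 3 k(1) mr uQ by auto
        qed
        then have "u = P!(a k) \<or> u = P!(b k)" using uQ setQ[OF k(1)] by auto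
        then show ?thesis using memL[of "a k"] memL[of "b k"] uL ab'[OF k(1)] aq[OF 3 k(1)] by auto
      qed
    qed
  qed
qed

end


context ext_loc begin

definition Dc where "Dc s j M = drop (Suc s) (take (b j) P) @ M"

definition inv where "inv i j s M \<longleftrightarrow> j < r \<and> i \<le> j \<and> distinct M \<and> hd M = P!(b j) \<and> last M = P!s \<and>
  2 \<le> length M \<and> a i \<le> s \<and> s < b j \<and> (Suc j < r \<longrightarrow> s \<le> a (Suc j)) \<and>
  (\<forall>x\<in>set M. (x \<in> set P \<and> a i \<le> pos P x \<and> (pos P x \<le> s \<or> pos P x = b j)) \<or>
               (\<exists>k. i \<le> k \<and> k \<le> j \<and> x \<in> inner (Qs!k))) \<and>
  path_edges M \<subseteq> E \<and> (\<forall>k. i \<le> k \<and> k \<le> j \<longrightarrow> path_edges (Qs!k) \<subseteq> path_edges M) \<and>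
  3 \<le> length (Dc s j M)"

lemma Dc_len: "j < r \<Longrightarrow> length (Dc s j M) = b j - Suc s + length M"
  using ab'[of j] by (simp add: Dc_def)

lemma D_cycle:
  assumes I: "inv i j s M"
  shows "cycle (Dc s j M) \<and>
    (\<forall>x\<in>set (Dc s j M). (x \<in> set P \<and> a i \<le> pos P x \<and> pos P x \<le> b j) \<or> (\<exists>k. i \<le> k \<and> k \<le> j \<and> x \<in> inner (Qs!k))) \<and>
    (\<forall>k. i \<le> k \<and> k \<le> j \<longrightarrow> path_edges (Qs!k) \<subseteq> cyc (Dc s j M))"
proof -
  let ?Pm = "drop (Suc s) (take (b j) P)"
  have jr: "j < r" and dM: "distinct M" and hM: "hd M = P!(b j)" and lM: "last M = P!s"
    and lenM: "2 \<le> length M" and ais: "a i \<le> s" and sb: "s < b j"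
    and Mv: "\<forall>x\<in>set M. (x \<in> set P \<and> a i \<le> pos P x \<and> (pos P x \<le> s \<or> pos P x = b j)) \<or>
               (\<exists>k. i \<le> k \<and> k \<le> j \<and> x \<in> inner (Qs!k))"
    and ME: "path_edges M \<subseteq> E" and MQ: "\<forall>k. i \<le> k \<and> k \<le> j \<longrightarrow> path_edges (Qs!k) \<subseteq> path_edges M"
    and len3: "3 \<le> length (Dc s j M)"
    using I by (auto simp: inv_def)
  have bP: "b j < length P" using ab'[OF jr] by simp
  have Mne: "M \<noteq> []" using lenM by auto
  have Pmset: "\<And>z. z \<in> set ?Pm \<longleftrightarrow> z \<in> set P \<and> Suc s \<le> pos P z \<and> pos P z < b j"
    using seg_set[of "b j"] bP by simp
  have innP: "\<And>k z. k < r \<Longrightarrow> z \<in> inner (Qs!k) \<Longrightarrow> z \<notin> set P" using Qinner by blast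
  have disj: "set ?Pm \<inter> set M = {}"
  proof (rule ccontr)
    assume "set ?Pm \<inter> set M \<noteq> {}"
    then obtain z where z: "z \<in> set ?Pm" "z \<in> set M" by blast
    then have zP: "z \<in> set P" "Suc s \<le> pos P z" "pos P z < b j" using Pmset by auto
    have "(z \<in> set P \<and> a i \<le> pos P z \<and> (pos P z \<le> s \<or> pos P z = b j)) \<or>
               (\<exists>k. i \<le> k \<and> k \<le> j \<and> z \<in> inner (Qs!k))" using Mv z(2) by blast
    then show False
    proof
      assume "z \<in> set P \<and> a i \<le> pos P z \<and> (pos P z \<le> s \<or> pos P z = b j)"
      then show False using zP by auto
    next
      assume "\<exists>k. i \<le> k \<and> k \<le> j \<and> z \<in> inner (Qs!k)"
      then obtain k where "k \<le> j" "z \<in> inner (Qs!k)" by blast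
      then show False using innP[of k z] zP(1) jr by simp
    qed
  qed
  have dist: "distinct (Dc s j M)" using seg_dist dM disj by (simp add: Dc_def)
  have setD: "\<And>x. x \<in> set (Dc s j M) \<Longrightarrow> (x \<in> set P \<and> a i \<le> pos P x \<and> pos P x \<le> b j) \<or> (\<exists>k. i \<le> k \<and> k \<le> j \<and> x \<in> inner (Qs!k))"
  proof -
    fix x assume "x \<in> set (Dc s j M)"
    then have "x \<in> set ?Pm \<or> x \<in> set M" by (simp add: Dc_def)
    then show "(x \<in> set P \<and> a i \<le> pos P x \<and> pos P x \<le> b j) \<or> (\<exists>k. i \<le> k \<and> k \<le> j \<and> x \<in> inner (Qs!k))"
    proof
      assume "x \<in> set ?Pm" then show ?thesis using Pmset ais by auto
    next
      assume "x \<in> set M" then show ?thesis using Mv sb by fastforce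
    qed
  qed
  have Vsub: "set (Dc s j M) \<subseteq> V"
  proof
    fix x assume "x \<in> set (Dc s j M)"
    from setD[OF this] show "x \<in> V"
    proof
      assume "x \<in> set P \<and> a i \<le> pos P x \<and> pos P x \<le> b j" then show ?thesis by (simp add: V_char)
    next
      assume "\<exists>k. i \<le> k \<and> k \<le> j \<and> x \<in> inner (Qs!k)"
      then obtain k where "k \<le> j" "x \<in> inner (Qs!k)" by blast
      then show ?thesis using inner_sub jr V_char by (meson le_less_trans subsetD)
    qed
  qed
  have peD: "path_edges (Dc s j M) \<subseteq> E"
  proof -
    have "path_edges ?Pm \<subseteq> E" by (rule seg_pe)
    moreover have "?Pm \<noteq> [] \<Longrightarrow> {last ?Pm, hd M} \<in> E"
    proof -
      assume "?Pm \<noteq> []"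
      then have "Suc s < b j" using bP by simp
      then have "last ?Pm = P!(b j - 1)" using seg_last[of "Suc s" "b j"] bP by simp
      moreover have "Suc (b j - 1) = b j" using sb by simp
      ultimately show ?thesis using pedge[of "b j - 1"] hM bP by simp
    qed
    ultimately show ?thesis using ME by (auto simp: Dc_def pe_append)
  qed
  have clos: "{last (Dc s j M), hd (Dc s j M)} \<in> E"
  proof -
    have "last (Dc s j M) = P!s" using lM Mne by (simp add: Dc_def)
    moreover have "hd (Dc s j M) = P!(Suc s)"
    proof (cases "Suc s < b j")
      case True then show ?thesis using seg_hd[of "Suc s" "b j"] bP by (simp add: Dc_def)
    next
      case False then have "b j = Suc s" using sb by simp
      then show ?thesis using hM by (simp add: Dc_def)
    qed
    ultimately show ?thesis using pedge[of s] sb bP by simp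
  qed
  have cyc1: "cycle (Dc s j M)"
    unfolding cycle_iff cyc_def using dist len3 Vsub peD clos by auto
  have "\<And>k. i \<le> k \<and> k \<le> j \<Longrightarrow> path_edges (Qs!k) \<subseteq> cyc (Dc s j M)"
    using MQ pe_app_r[of M ?Pm] by (auto simp: Dc_def cyc_def)
  then show ?thesis using cyc1 setD by blast
qed

lemma U_D:
  assumes I: "inv i j s M"
  shows "U (Dc s j M) = {i..j}"
proof -
  have jr: "j < r" using I by (simp add: inv_def)
  have ir: "i < r" using I by (auto simp: inv_def)
  have DCall: "cycle (Dc s j M) \<and>
    (\<forall>x\<in>set (Dc s j M). (x \<in> set P \<and> a i \<le> pos P x \<and> pos P x \<le> b j) \<or> (\<exists>k. i \<le> k \<and> k \<le> j \<and> x \<in> inner (Qs!k))) \<and>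
    (\<forall>k. i \<le> k \<and> k \<le> j \<longrightarrow> path_edges (Qs!k) \<subseteq> cyc (Dc s j M))" by (rule D_cycle[OF I])
  have DC: "cycle (Dc s j M)" using DCall by blast
  have sD: "\<And>x. x \<in> set (Dc s j M) \<Longrightarrow> (x \<in> set P \<and> a i \<le> pos P x \<and> pos P x \<le> b j) \<or> (\<exists>k. i \<le> k \<and> k \<le> j \<and> x \<in> inner (Qs!k))"
    using DCall by blast
  have DQ: "\<And>k. i \<le> k \<Longrightarrow> k \<le> j \<Longrightarrow> path_edges (Qs!k) \<subseteq> cyc (Dc s j M)"
    using DCall by blast
  have Dne: "Dc s j M \<noteq> []" using DC unfolding cycle_iff by auto
  have Pin: "\<And>x. x \<in> set P \<Longrightarrow> x \<in> set (Dc s j M) \<Longrightarrow> a i \<le> pos P x \<and> pos P x \<le> b j"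
  proof -
    fix x assume xP: "x \<in> set P" and xD: "x \<in> set (Dc s j M)"
    have "\<not> (\<exists>k. i \<le> k \<and> k \<le> j \<and> x \<in> inner (Qs!k))"
    proof
      assume "\<exists>k. i \<le> k \<and> k \<le> j \<and> x \<in> inner (Qs!k)"
      then obtain k where "k \<le> j" "x \<in> inner (Qs!k)" by blast
      then show False using Qinner[of k] jr xP by auto
    qed
    then show "a i \<le> pos P x \<and> pos P x \<le> b j" using sD[OF xD] by blast
  qed
  show ?thesis
  proof
    show "{i..j} \<subseteq> U (Dc s j M)"
    proof
      fix k assume "k \<in> {i..j}"
      then show "k \<in> U (Dc s j M)" using DQ[of k] jr unfolding U_def by auto
    qed
    show "U (Dc s j M) \<subseteq> {i..j}"
    proof
      fix k assume k: "k \<in> U (Dc s j M)"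
      then have kr: "k < r" and kQ: "path_edges (Qs!k) \<subseteq> cyc (Dc s j M)" by (auto simp: U_def)
      have "\<not> k < i"
      proof
        assume ki: "k < i"
        have akP: "a k < length P" using ab'[OF kr] by simp
        have "P!(a k) \<in> set (Qs!k)" using setQ[OF kr] by auto
        then have "P!(a k) \<in> set (Dc s j M)" using vert_in_cyc[OF kr _ kQ Dne] by blast
        then have "a i \<le> pos P (P!(a k))" using Pin[of "P!(a k)"] akP by simp
        then have "a i \<le> a k" using pos_nth[OF akP] by simp
        moreover have "a k < a i" using a_mono[OF ki ir] .
        ultimately show False by simp
      qed
      moreover have "\<not> j < k"
      proof
        assume jk: "j < k"
        have bkP: "b k < length P" using ab'[OF kr] by simp
        have "P!(b k) \<in> set (Qs!k)" using setQ[OF kr] by auto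
        then have "P!(b k) \<in> set (Dc s j M)" using vert_in_cyc[OF kr _ kQ Dne] by blast
        then have "pos P (P!(b k)) \<le> b j" using Pin[of "P!(b k)"] bkP by simp
        then have "b k \<le> b j" using pos_nth[OF bkP] by simp
        then show False using b_mono[OF jk kr] by simp
      qed
      ultimately show "k \<in> {i..j}" by simp
    qed
  qed
qed

lemma base:
  assumes i: "i < r"
  shows "inv i i (a i) (Qhl i) \<and> length (Dc (a i) i (Qhl i)) < l"
proof -
  let ?Q = "Qs!i"
  have H: "hd (Qhl i) = P!(b i)" "last (Qhl i) = P!(a i)" "distinct (Qhl i)" "set (Qhl i) = set ?Q"
     "path_edges (Qhl i) = path_edges ?Q" "length (Qhl i) = length ?Q"
    using Qhl[OF i] by auto
  have ab1: "a i < b i" "b i < length P" using ab'[OF i] by auto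
  have lenQ: "2 \<le> length ?Q" using Qlen[OF i] .
  have len: "length (Dc (a i) i (Qhl i)) = b i - Suc (a i) + length ?Q" using Dc_len[OF i] H by simp
  have len3: "3 \<le> length (Dc (a i) i (Qhl i))"
  proof (cases "length ?Q = 2")
    case False then show ?thesis using len lenQ by simp
  next
    case True
    have "b i \<noteq> Suc (a i)"
    proof
      assume eq: "b i = Suc (a i)"
      have "Suc (a i) < length P" using ab1 eq by simp
      then have e1: "{P!(a i), P!Suc (a i)} \<in> path_edges P" unfolding path_edges_def by blast
      have "{hd ?Q, last ?Q} = {P!(a i), P!Suc (a i)}" using lohi[OF i] eq by simp
      then show False using Qlen2[OF i True] e1 by simp
    qed
    then show ?thesis using len True ab1 by simp
  qed
  have "length (Dc (a i) i (Qhl i)) < l" using len ecl[OF i] ab1 lenQ by simp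
  moreover have "inv i i (a i) (Qhl i)"
    unfolding inv_def
  proof (intro conjI)
    show "\<forall>x\<in>set (Qhl i). (x \<in> set P \<and> a i \<le> pos P x \<and> (pos P x \<le> a i \<or> pos P x = b i)) \<or>
               (\<exists>k. i \<le> k \<and> k \<le> i \<and> x \<in> inner (Qs!k))"
      using H(4) setQ[OF i] pos_nth[of "a i"] pos_nth[of "b i"] ab1 by auto
    show "path_edges (Qhl i) \<subseteq> E" using H(5) i unfolding E_char QE_def by blast
    show "\<forall>k. i \<le> k \<and> k \<le> i \<longrightarrow> path_edges (Qs!k) \<subseteq> path_edges (Qhl i)" using H(5) by auto
    show "Suc i < r \<longrightarrow> a i \<le> a (Suc i)" using E4[of i] by auto
  qed (simp_all add: H i ab1 lenQ len3)
  ultimately show ?thesis by blast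
qed

end


context ext_loc begin

lemma step:
  assumes I: "inv i j s M" and j1: "Suc j < r"
  defines "M' \<equiv> butlast (Qhl (Suc j)) @ rev (drop (Suc s) (take (Suc (a (Suc j))) P)) @ rev M"
  shows "inv i (Suc j) (b j) M' \<and>
    length (Dc (b j) (Suc j) M') + 2 * (b j - a (Suc j)) =
      length (Dc s j M) + (b (Suc j) - a (Suc j) + (length (Qs!Suc j) - 1))"
proof -
  have jr: "j < r" and ij: "i \<le> j" and dM: "distinct M" and hM: "hd M = P!(b j)" and lM: "last M = P!s"
    and lenM: "2 \<le> length M" and ais: "a i \<le> s" and sb: "s < b j" and sA: "s \<le> a (Suc j)"
    and Mv: "\<forall>x\<in>set M. (x \<in> set P \<and> a i \<le> pos P x \<and> (pos P x \<le> s \<or> pos P x = b j)) \<or>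
               (\<exists>k. i \<le> k \<and> k \<le> j \<and> x \<in> inner (Qs!k))"
    and ME: "path_edges M \<subseteq> E" and MQ: "\<forall>k. i \<le> k \<and> k \<le> j \<longrightarrow> path_edges (Qs!k) \<subseteq> path_edges M"
    using I j1 by (auto simp: inv_def)
  define A where "A = a (Suc j)"
  define B where "B = b (Suc j)"
  define Bj where "Bj = b j"
  define Qh where "Qh = Qhl (Suc j)"
  define Ps where "Ps = drop (Suc s) (take (Suc A) P)"
  define R where "R = rev Ps @ rev M"
  have M'def: "M' = butlast Qh @ R" by (simp add: M'_def R_def Ps_def Qh_def A_def)
  have E4j: "a j < A" "A < Bj" "Bj < B" using E4[OF j1] by (auto simp: A_def B_def Bj_def)
  have BP: "B < length P" using ab'[OF j1] by (simp add: B_def)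
  have abA: "A < B" using ab'[OF j1] by (simp add: A_def B_def)
  have QH: "hd Qh = P!B" "last Qh = P!A" "distinct Qh" "set Qh = set (Qs!Suc j)"
     "path_edges Qh = path_edges (Qs!Suc j)" "length Qh = length (Qs!Suc j)"
    using Qhl[OF j1] by (auto simp: Qh_def A_def B_def)
  have lenQ: "2 \<le> length (Qs!Suc j)" using Qlen[OF j1] .
  have Qhne: "Qh \<noteq> []" using QH(6) lenQ by auto
  have sQ: "set (Qs!Suc j) = {P!A, P!B} \<union> inner (Qs!Suc j)" using setQ[OF j1] by (simp add: A_def B_def)
  have Pne: "P!A \<noteq> P!B" using abA BP distP by (simp add: nth_eq_iff_index_eq)
  have innQ: "inner (Qs!Suc j) \<inter> set P = {}" using Qinner[OF j1] .
  have PAP: "P!A \<in> set P" using abA BP by simp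
  have sbQ: "set (butlast Qh) = insert (P!B) (inner (Qs!Suc j))"
  proof -
    have "set (butlast Qh) = set Qh - {P!A}" using set_butlast_dist[OF QH(3)] QH(2) by simp
    also have "\<dots> = insert (P!B) (inner (Qs!Suc j))"
      using QH(4) sQ Pne innQ PAP by auto
    finally show ?thesis .
  qed
  have APl: "Suc A \<le> length P" using abA BP by simp
  have Psset: "\<And>z. z \<in> set Ps \<longleftrightarrow> z \<in> set P \<and> Suc s \<le> pos P z \<and> pos P z < Suc A"
    unfolding Ps_def using seg_set[OF APl] by simp
  have Mne: "M \<noteq> []" using lenM by auto
  have innP: "\<And>k z. k < r \<Longrightarrow> z \<in> inner (Qs!k) \<Longrightarrow> z \<notin> set P" using Qinner by blast
  have Mv': "\<And>x. x \<in> set M \<Longrightarrow> (x \<in> set P \<and> a i \<le> pos P x \<and> (pos P x \<le> s \<or> pos P x = Bj)) \<or>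
               (\<exists>k. i \<le> k \<and> k \<le> j \<and> x \<in> inner (Qs!k))" using Mv Bj_def by blast
  have MP: "\<And>x. x \<in> set M \<Longrightarrow> x \<in> set P \<Longrightarrow> a i \<le> pos P x \<and> (pos P x \<le> s \<or> pos P x = Bj)"
  proof -
    fix x assume x: "x \<in> set M" "x \<in> set P"
    have "\<not> (\<exists>k. i \<le> k \<and> k \<le> j \<and> x \<in> inner (Qs!k))"
    proof
      assume "\<exists>k. i \<le> k \<and> k \<le> j \<and> x \<in> inner (Qs!k)"
      then obtain k where "k \<le> j" "x \<in> inner (Qs!k)" by blast
      then show False using innP[of k x] jr x(2) by simp
    qed
    then show "a i \<le> pos P x \<and> (pos P x \<le> s \<or> pos P x = Bj)" using Mv'[OF x(1)] by blast
  qed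
  have MnP: "\<And>x. x \<in> set M \<Longrightarrow> x \<notin> set P \<Longrightarrow> \<exists>k. i \<le> k \<and> k \<le> j \<and> x \<in> inner (Qs!k)"
    using Mv' by blast
  have posB: "pos P (P!B) = B" using pos_nth BP by simp
  have dR: "distinct R"
  proof -
    have "set Ps \<inter> set M = {}"
    proof (rule ccontr)
      assume "set Ps \<inter> set M \<noteq> {}"
      then obtain z where z: "z \<in> set Ps" "z \<in> set M" by blast
      then have "z \<in> set P" "Suc s \<le> pos P z" "pos P z < Suc A" using Psset by auto
      then show False using MP[OF z(2)] E4j by auto
    qed
    then show ?thesis using seg_dist dM by (simp add: R_def Ps_def)
  qed
  have dM': "distinct M'"
  proof -
    have "set (butlast Qh) \<inter> set R = {}"
    proof (rule ccontr)
      assume "set (butlast Qh) \<inter> set R \<noteq> {}"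
      then obtain z where z1: "z \<in> set (butlast Qh)" and z2: "z \<in> set Ps \<or> z \<in> set M"
        by (auto simp: R_def)
      from z1 sbQ have "z = P!B \<or> z \<in> inner (Qs!Suc j)" by auto
      then show False
      proof
        assume zB: "z = P!B"
        have zP: "z \<in> set P" using zB BP by simp
        from z2 show False
        proof
          assume "z \<in> set Ps" then show False using Psset zB posB abA by auto
        next
          assume "z \<in> set M" then show False using MP[of z] zP zB posB E4j sb by (auto simp: Bj_def)
        qed
      next
        assume zi: "z \<in> inner (Qs!Suc j)"
        then have zP: "z \<notin> set P" using innQ by auto
        from z2 show False
        proof
          assume "z \<in> set Ps" then show False using Psset zP by auto
        next
          assume zM: "z \<in> set M"
          then obtain k where k: "k \<le> j" "z \<in> inner (Qs!k)" using MnP zP by blast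
          then have "z \<in> set (Qs!k)" using inner_sub[of "Qs!k"] by blast
          then show False using Qdisj[of "Suc j" k] j1 k(1) zi by auto
        qed
      qed
    qed
    then show ?thesis using dR QH(3) by (simp add: M'def distinct_butlast)
  qed
  have hR: "hd R = P!A"
  proof (cases "Ps = []")
    case True
    then have "A = s" using sA APl by (simp add: Ps_def A_def)
    then show ?thesis using True lM Mne by (simp add: R_def hd_rev)
  next
    case False
    then have "s < A" using APl by (simp add: Ps_def)
    then have "last Ps = P!A" unfolding Ps_def using seg_last[of "Suc s" "Suc A"] APl by simp
    then show ?thesis using False by (simp add: R_def hd_rev)
  qed
  have Rne: "R \<noteq> []" using Mne by (simp add: R_def)
  have bQne: "butlast Qh \<noteq> []" using QH(6) lenQ by (cases Qh) auto
  have hM': "hd M' = P!B" using hd_butlast[of Qh] QH(1,6) lenQ bQne by (simp add: M'def)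
  have lM': "last M' = P!Bj" using hM Mne by (simp add: M'def R_def last_rev Bj_def)
  have lenPs: "length Ps = A - s" using APl by (simp add: Ps_def)
  have lenM': "length M' = (length (Qs!Suc j) - 1) + (A - s) + length M"
    using QH(6) lenPs by (simp add: M'def R_def)
  have vM': "\<forall>x\<in>set M'. (x \<in> set P \<and> a i \<le> pos P x \<and> (pos P x \<le> Bj \<or> pos P x = B)) \<or>
               (\<exists>k. i \<le> k \<and> k \<le> Suc j \<and> x \<in> inner (Qs!k))"
  proof
    fix x assume "x \<in> set M'"
    then have "x \<in> set (butlast Qh) \<or> x \<in> set Ps \<or> x \<in> set M" by (auto simp: M'def R_def)
    then show "(x \<in> set P \<and> a i \<le> pos P x \<and> (pos P x \<le> Bj \<or> pos P x = B)) \<or>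
               (\<exists>k. i \<le> k \<and> k \<le> Suc j \<and> x \<in> inner (Qs!k))"
    proof (elim disjE)
      assume "x \<in> set (butlast Qh)"
      then have "x = P!B \<or> x \<in> inner (Qs!Suc j)" using sbQ by auto
      then show ?thesis using posB BP ais sb E4j ij by (auto simp: Bj_def)
    next
      assume "x \<in> set Ps"
      then show ?thesis using Psset ais E4j by fastforce
    next
      assume xM: "x \<in> set M"
      show ?thesis
      proof (cases "x \<in> set P")
        case True then show ?thesis using MP[OF xM True] sb by (auto simp: Bj_def)
      next
        case False then obtain k where "i \<le> k" "k \<le> j" "x \<in> inner (Qs!k)" using MnP[OF xM] by blast
        then show ?thesis by (intro disjI2 exI[of _ k]) auto
      qed
    qed
  qed
  have peR: "path_edges R \<subseteq> E \<and> path_edges M \<subseteq> path_edges R"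
  proof -
    have "Ps \<noteq> [] \<Longrightarrow> {last (rev Ps), hd (rev M)} \<in> E"
    proof -
      assume ne: "Ps \<noteq> []"
      then have "s < A" using APl by (simp add: Ps_def)
      then have "hd Ps = P!(Suc s)" unfolding Ps_def using seg_hd[of "Suc s" "Suc A"] APl by simp
      then have "{last (rev Ps), hd (rev M)} = {P!(Suc s), P!s}" using ne lM Mne by (simp add: last_rev hd_rev)
      then show ?thesis using pedge[of s] \<open>s < A\<close> APl by (simp add: insert_commute)
    qed
    moreover have "path_edges (rev Ps) \<subseteq> E" using seg_pe[of "Suc s" "Suc A"] by (simp add: Ps_def)
    ultimately show ?thesis using ME unfolding R_def pe_append by auto
  qed
  have peM': "path_edges M' \<subseteq> E"
  proof -
    have "path_edges (butlast Qh) \<subseteq> E" using pe_butlast[of Qh] QH(5) j1 unfolding E_char QE_def by blast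
    moreover have "{last (butlast Qh), hd R} \<in> E"
      using pe_last_edge[of Qh] QH(2,5,6) lenQ hR j1 unfolding E_char QE_def by auto
    ultimately show ?thesis using peR unfolding M'def pe_append by auto
  qed
  have QM': "\<forall>k. i \<le> k \<and> k \<le> Suc j \<longrightarrow> path_edges (Qs!k) \<subseteq> path_edges M'"
  proof (intro allI impI)
    fix k assume k: "i \<le> k \<and> k \<le> Suc j"
    show "path_edges (Qs!k) \<subseteq> path_edges M'"
    proof (cases "k = Suc j")
      case True
      have "Qh = butlast Qh @ [hd R]" using append_butlast_last_id[OF Qhne] QH(2) hR by simp
      then have "path_edges Qh = path_edges (butlast Qh) \<union> {{last (butlast Qh), hd R}}"
        using pe_append[of "butlast Qh" "[hd R]"] bQne by simp
      then show ?thesis using True QH(5) Rne bQne unfolding M'def pe_append by auto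
    next
      case False
      then have "k \<le> j" using k by simp
      then have "path_edges (Qs!k) \<subseteq> path_edges M" using MQ k by blast
      then have "path_edges (Qs!k) \<subseteq> path_edges R" using peR by blast
      then show ?thesis using pe_app_r[of R "butlast Qh"] by (simp add: M'def)
    qed
  qed
  have lenD': "length (Dc Bj (Suc j) M') = B - Suc Bj + length M'"
    using Dc_len[OF j1] by (simp add: B_def)
  have lenD: "length (Dc s j M) = Bj - Suc s + length M"
    using Dc_len[OF jr] by (simp add: Bj_def)
  have inv': "inv i (Suc j) Bj M'"
    unfolding inv_def
  proof (intro conjI)
    show "Suc (Suc j) < r \<longrightarrow> Bj \<le> a (Suc (Suc j))" using E5[of j] by (simp add: Bj_def)
    show "3 \<le> length (Dc Bj (Suc j) M')" using lenD' lenM' lenQ lenM by simp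
    show "\<forall>x\<in>set M'. (x \<in> set P \<and> a i \<le> pos P x \<and> (pos P x \<le> Bj \<or> pos P x = b (Suc j))) \<or>
               (\<exists>k. i \<le> k \<and> k \<le> Suc j \<and> x \<in> inner (Qs!k))" using vM' by (simp add: B_def)
  qed (use j1 ij dM' hM' lM' lenM' lenM ais sb E4j peM' QM' in \<open>simp_all add: B_def Bj_def\<close>)
  have "length (Dc Bj (Suc j) M') + 2 * (Bj - A) = length (Dc s j M) + (B - A + (length (Qs!Suc j) - 1))"
  proof -
    have sA': "s \<le> A" using sA by (simp add: A_def)
    show ?thesis using lenD' lenD lenM' sA' E4j lenQ by arith
  qed
  then show ?thesis using inv' by (simp add: Bj_def A_def B_def)
qed

end


context ext_loc begin

lemma constr:
  assumes long: "\<forall>C. cycle C \<and> l \<le> length C \<longrightarrow> 2 * l \<le> length C" and i: "i < r"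
  shows "i + n < r \<Longrightarrow> \<exists>s M. inv i (i + n) s M \<and> length (Dc s (i + n) M) < l"
proof (induction n)
  case 0 then show ?case using base[OF i] by auto
next
  case (Suc n)
  then obtain s M where I: "inv i (i + n) s M" and L: "length (Dc s (i + n) M) < l" by auto
  let ?j = "i + n"
  have j1: "Suc ?j < r" using Suc.prems by simp
  define M' where "M' = butlast (Qhl (Suc ?j)) @ rev (drop (Suc s) (take (Suc (a (Suc ?j))) P)) @ rev M"
  have st: "inv i (Suc ?j) (b ?j) M' \<and>
    length (Dc (b ?j) (Suc ?j) M') + 2 * (b ?j - a (Suc ?j)) =
      length (Dc s ?j M) + (b (Suc ?j) - a (Suc ?j) + (length (Qs!Suc ?j) - 1))"
    using step[OF I j1] unfolding M'_def .
  have c: "cycle (Dc (b ?j) (Suc ?j) M')" using D_cycle st by blast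
  have "b (Suc ?j) - a (Suc ?j) + (length (Qs!Suc ?j) - 1) < l" using ecl[OF j1] .
  moreover have "a (Suc ?j) < b ?j" using E4[OF j1] by simp
  ultimately have "length (Dc (b ?j) (Suc ?j) M') < 2 * l" using st L by linarith
  then have "length (Dc (b ?j) (Suc ?j) M') < l" using long c by (meson not_le)
  then show ?case using st by (auto intro!: exI[of _ "b ?j"] exI[of _ M'])
qed

lemma main:
  assumes long: "\<forall>C. cycle C \<and> l \<le> length C \<longrightarrow> 2 * l \<le> length C" and C: "cycle C"
  shows "length C < l"
proof -
  have Une: "U C \<noteq> {}" using U_ne[OF C] .
  have Ufin: "finite (U C)" by (rule finite_subset[of _ "{..<r}"]) (auto simp: U_def)
  define i where "i = Min (U C)"
  define j where "j = Max (U C)"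
  have iU: "i \<in> U C" and jU: "j \<in> U C" using Une Ufin by (auto simp: i_def j_def)
  have ij: "i \<le> j" using Une Ufin by (simp add: i_def j_def)
  have jr: "j < r" using jU by (simp add: U_def)
  have ir: "i < r" using ij jr by simp
  have UC: "U C = {i..j}"
  proof
    show "U C \<subseteq> {i..j}" using Ufin by (auto simp: i_def j_def)
    show "{i..j} \<subseteq> U C"
    proof
      fix k assume k: "k \<in> {i..j}"
      show "k \<in> U C"
      proof (cases "k = i \<or> k = j")
        case True then show ?thesis using iU jU by auto
      next
        case False then show ?thesis using U_interval[OF C iU jU] k by auto
      qed
    qed
  qed
  obtain s M where I: "inv i (i + (j - i)) s M" and L: "length (Dc s (i + (j - i)) M) < l"
    using constr[OF long ir, of "j - i"] ij jr by auto
  have I': "inv i j s M" and L': "length (Dc s j M) < l" using I L ij by auto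
  let ?D = "Dc s j M"
  have D: "cycle ?D" using D_cycle[OF I'] by blast
  have "U ?D = U C" using U_D[OF I'] UC by simp
  then have "cyc C \<inter> QE = cyc ?D \<inter> QE" using cycQE_U[OF C] cycQE_U[OF D] by simp
  then have "cyc C = cyc ?D" using edges_eq[OF C D] by simp
  then have "length C = length ?D"
    using card_cyc C D unfolding cycle_iff by metis
  then show ?thesis using L' by simp
qed

end

theorem lemma3:
  fixes l :: nat and P :: "'a list" and Qs :: "'a list list"
  assumes "l > 0"
    and "extension l P Qs"
    and "\<forall>C. is_cycle_in (H_verts P Qs) (H_edges P Qs) C \<and> length C \<ge> l
              \<longrightarrow> length C \<ge> 2 * l"
  shows "\<forall>C. is_cycle_in (H_verts P Qs) (H_edges P Qs) C \<longrightarrow> length C < l"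
proof -
  interpret ext_loc l P Qs using assms(2) by unfold_locales
  show ?thesis using main assms(3) by blast
qed


end
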